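(* Let $K\in\mathcal{K}^d$. (i) Suppose $(a^k,b^k)\to(a,b)$ in $\mathbb{R}^d\times\mathbb{R}$ as $k\to\infty$, with $a\ne0$ and $a^k\ne0$ for all $k$, and $K\cap H^+_{(a,b)}\in\mathcal{K}^d$ and $K\cap H^+_{(a^k,b^k)}\in\mathcal{K}^d$ for all $k\ge1$. Then $K\cap H^+_{(a^k,b^k)}\to K\cap H^+_{(a,b)}$ in the symmetric difference metric $d_S$ as $k\to\infty$. (ii) Suppose $(x^k,w^k)\to(x,w)$ in $F(\mathbb{R}^d,n)\times W_n$, let $1\le i\le n$, and suppose $K\cap C_i(x,w)\in\mathcal{K}^d$ and $K\cap C_i(x^k,w^k)\in\mathcal{K}^d$ for all $k\ge1$. Then $K\cap C_i(x^k,w^k)\to K\cap C_i(x,w)$ in $d_S$ as $k\to\infty$.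
   Context: $\mathcal{K}^d$ is the set of compact convex subsets of $\mathbb{R}^d$ with nonempty interior; $d_S(X,Y)=\mathcal{L}^d(X\triangle Y)$ (Lebesgue measure of the symmetric difference), which induces the same topology on $\mathcal{K}^d$ as the Hausdorff metric. For $(a,b)\in\mathbb{R}^d\times\mathbb{R}$ with $a\ne0$, $H^+_{(a,b)}=\{p\in\mathbb{R}^d:\langle a,p\rangle+b\ge0\}$. $F(\mathbb{R}^d,n)$ is the space of $n$-tuples of pairwise distinct points, $W_n=\{w\in\mathbb{R}^n:\sum w_i=0\}$, and $C_i(x,w)=\{p\in\mathbb{R}^d:\|p-x_i\|^2-w_i\le\|p-x_j\|^2-w_j\text{ for all }1\le j\le n\}$. *)

theory Defs
  imports "HOL-Analysis.Analysis"
begin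

definition convex_body :: "'a::euclidean_space set \<Rightarrow> bool" where
  "convex_body K \<longleftrightarrow> compact K \<and> convex K \<and> interior K \<noteq> {}"

definition dS :: "'a::euclidean_space set \<Rightarrow> 'a set \<Rightarrow> real" where
  "dS X Y = measure lebesgue ((X - Y) \<union> (Y - X))"

definition halfspace_plus :: "'a::euclidean_space \<Rightarrow> real \<Rightarrow> 'a set" where
  "halfspace_plus a b = {p. inner a p + b \<ge> 0}"

definition power_cell :: "nat \<Rightarrow> (nat \<Rightarrow> 'a::euclidean_space) \<Rightarrow> (nat \<Rightarrow> real) \<Rightarrow> nat \<Rightarrow> 'a set" where
  "power_cell n x w i =
     {p. \<forall>j\<in>{1..n}. (norm (p - x i))\<^sup>2 - w i \<le> (norm (p - x j))\<^sup>2 - w j}"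

definition distinct_config :: "nat \<Rightarrow> (nat \<Rightarrow> 'a) \<Rightarrow> bool" where
  "distinct_config n x \<longleftrightarrow> (\<forall>j\<in>{1..n}. \<forall>l\<in>{1..n}. j \<noteq> l \<longrightarrow> x j \<noteq> x l)"

definition zero_sum_weights :: "nat \<Rightarrow> (nat \<Rightarrow> real) \<Rightarrow> bool" where
  "zero_sum_weights n w \<longleftrightarrow> (\<Sum>j=1..n. w j) = 0"

end

theory Submission
  imports Defs
begin

lemma generic:
  fixes K :: "'a::euclidean_space set"
  assumes K: "compact K" and Sk: "\<And>k. closed (S k)" and S: "closed T"
    and N: "negligible N"
    and ev: "\<And>p. p \<in> K \<Longrightarrow> p \<notin> N \<Longrightarrow> eventually (\<lambda>k. p \<in> S k \<longleftrightarrow> p \<in> T) sequentially"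
  shows "(\<lambda>k. dS (K \<inter> S k) (K \<inter> T)) \<longlonglongrightarrow> 0"
proof -
  define D where "D k = (K \<inter> S k - K \<inter> T) \<union> (K \<inter> T - K \<inter> S k)" for k
  have cK: "\<And>k. compact (K \<inter> S k)" "compact (K \<inter> T)"
    using K Sk S by (auto intro: compact_Int_closed)
  have Dm: "D k \<in> lmeasurable" for k
    unfolding D_def using cK
    by (intro fmeasurable.Un fmeasurable.Diff lmeasurable_compact) auto
  have Km: "K \<in> lmeasurable" using K by (rule lmeasurable_compact)
  have "(\<lambda>k. integral\<^sup>L lebesgue (indicator (D k) :: 'a \<Rightarrow> real)) \<longlonglongrightarrow> integral\<^sup>L lebesgue (\<lambda>_::'a. 0::real)"
  proof (rule integral_dominated_convergence[where w="indicator K :: 'a \<Rightarrow> real" and s="\<lambda>k. indicator (D k)" and f="\<lambda>_. 0"])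
    show "(\<lambda>_::'a. 0::real) \<in> borel_measurable lebesgue" by simp
    show "indicator (D k) \<in> borel_measurable lebesgue" for k
      using Dm by (auto intro: borel_measurable_indicator simp: fmeasurable_def)
    show "integrable lebesgue (indicator K :: 'a \<Rightarrow> real)"
      using Km by (auto simp: fmeasurable_def intro!: integrable_real_indicator)
    show "AE x in lebesgue. norm (indicator (D k) x :: real) \<le> indicator K x" for k
      by (rule AE_I2) (auto simp: D_def indicator_def)
    have "N \<in> null_sets lebesgue" using N negligible_iff_null_sets by blast
    then show "AE x in lebesgue. (\<lambda>k. indicator (D k) x :: real) \<longlonglongrightarrow> 0"
    proof (rule AE_I')
      show "{x \<in> space lebesgue. \<not> (\<lambda>k. indicator (D k) x :: real) \<longlonglongrightarrow> 0} \<subseteq> N"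
      proof (safe, rule ccontr)
        fix x assume nc: "\<not> (\<lambda>k. indicator (D k) x :: real) \<longlonglongrightarrow> 0" and xN: "x \<notin> N"
        have "eventually (\<lambda>k. indicator (D k) x = (0::real)) sequentially"
        proof (cases "x \<in> K")
          case True
          show ?thesis using ev[OF True xN] by eventually_elim (auto simp: D_def)
        next
          case False
          then show ?thesis by (auto simp: D_def)
        qed
        then have "(\<lambda>k. indicator (D k) x :: real) \<longlonglongrightarrow> 0"
          by (rule tendsto_eventually)
        then show False using nc by simp
      qed
    qed
  qed
  moreover have "integral\<^sup>L lebesgue (indicator (D k) :: 'a \<Rightarrow> real) = dS (K \<inter> S k) (K \<inter> T)" for k
    by (simp add: dS_def D_def)
  ultimately show ?thesis by simp
qed


lemma closed_halfspace_plus: "closed (halfspace_plus a b)"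
  unfolding halfspace_plus_def
  by (rule closed_Collect_le[of "\<lambda>_. 0" "\<lambda>p. inner a p + b", simplified]) (intro continuous_intros)

lemma closed_power_cell: "closed (power_cell n x w i)"
proof -
  have "power_cell n x w i = (\<Inter>j\<in>{1..n}. {p. (norm (p - x i))\<^sup>2 - w i \<le> (norm (p - x j))\<^sup>2 - w j})"
    unfolding power_cell_def by auto
  also have "closed \<dots>"
    by (intro closed_INT ballI closed_Collect_le continuous_intros)
  finally show ?thesis .
qed

lemma sq_expand:
  fixes p q :: "'a::euclidean_space"
  shows "(norm (p - q))\<^sup>2 = inner p p - 2 * inner q p + inner q q"
  by (simp add: power2_norm_eq_inner inner_diff_left inner_diff_right inner_commute)

lemma part1:
  fixes K :: "'a::euclidean_space set"
  assumes K: "compact K"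
    and lim: "(\<lambda>k. (ak k, bk k)) \<longlonglongrightarrow> (a, b)" and a: "a \<noteq> 0"
  shows "(\<lambda>k. dS (K \<inter> halfspace_plus (ak k) (bk k)) (K \<inter> halfspace_plus a b)) \<longlonglongrightarrow> 0"
proof (rule generic[OF K closed_halfspace_plus closed_halfspace_plus])
  show "negligible {p. inner a p = - b}" using a by (rule negligible_hyperplane[OF disjI1])
  fix p assume "p \<in> K" "p \<notin> {p. inner a p = - b}"
  then have ne: "inner a p + b \<noteq> 0" by auto
  have la: "ak \<longlonglongrightarrow> a" using tendsto_fst[OF lim] by simp
  have lb: "bk \<longlonglongrightarrow> b" using tendsto_snd[OF lim] by simp
  have l: "(\<lambda>k. inner (ak k) p + bk k) \<longlonglongrightarrow> inner a p + b"
    by (intro tendsto_intros la lb)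
  show "eventually (\<lambda>k. p \<in> halfspace_plus (ak k) (bk k) \<longleftrightarrow> p \<in> halfspace_plus a b) sequentially"
  proof (cases "inner a p + b > 0")
    case True
    from order_tendstoD(1)[OF l True] show ?thesis
      by eventually_elim (use True in \<open>auto simp: halfspace_plus_def\<close>)
  next
    case False
    then have "inner a p + b < 0" using ne by auto
    then have n: "\<not> inner a p + b \<ge> 0" by simp
    from order_tendstoD(2)[OF l \<open>inner a p + b < 0\<close>] show ?thesis
      by eventually_elim (use n in \<open>auto simp: halfspace_plus_def\<close>)
  qed
qed

lemma part2:
  fixes K :: "'a::euclidean_space set"
  assumes K: "compact K"
    and dx: "distinct_config n x" and i: "i \<in> {1..n}"
    and lx: "\<And>j. j \<in> {1..n} \<Longrightarrow> (\<lambda>k. xk k j) \<longlonglongrightarrow> x j"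
    and lw: "\<And>j. j \<in> {1..n} \<Longrightarrow> (\<lambda>k. wk k j) \<longlonglongrightarrow> w j"
  shows "(\<lambda>k. dS (K \<inter> power_cell n (xk k) (wk k) i) (K \<inter> power_cell n x w i)) \<longlonglongrightarrow> 0"
proof (rule generic[OF K closed_power_cell closed_power_cell])
  define G where "G y v j p = (norm (p - y i))\<^sup>2 - v i - ((norm (p - y j))\<^sup>2 - v j)"
    for y :: "nat \<Rightarrow> 'a" and v :: "nat \<Rightarrow> real" and j p
  define N where "N = (\<Union>j\<in>{1..n}-{i}. {p. G x w j p = 0})"
  have hyp: "{p. G x w j p = 0} = {p. inner (2 *\<^sub>R (x j - x i)) p = inner (x j) (x j) - inner (x i) (x i) + w i - w j}" for j
    unfolding G_def sq_expand by (auto simp: inner_diff_left algebra_simps)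
  show "negligible N"
    unfolding N_def
  proof (rule negligible_Union)
    show "finite ((\<lambda>j. {p. G x w j p = 0}) ` ({1..n} - {i}))" by simp
    fix T assume "T \<in> (\<lambda>j. {p. G x w j p = 0}) ` ({1..n} - {i})"
    then obtain j where j0: "j \<in> {1..n} - {i}" and T: "T = {p. G x w j p = 0}" by blast
    from j0 have j: "j \<in> {1..n}" "j \<noteq> i" by auto
    have "x j \<noteq> x i" using dx j i unfolding distinct_config_def by auto
    then have "2 *\<^sub>R (x j - x i) \<noteq> 0" by simp
    then show "negligible T" unfolding T hyp by (rule negligible_hyperplane[OF disjI1])
  qed
  have mem: "p \<in> power_cell n y v i \<longleftrightarrow> (\<forall>j\<in>{1..n}. G y v j p \<le> 0)" for y v p
    unfolding power_cell_def G_def by auto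
  fix p assume pK: "p \<in> K" and pN: "p \<notin> N"
  have "\<forall>j\<in>{1..n}. eventually (\<lambda>k. G (xk k) (wk k) j p \<le> 0 \<longleftrightarrow> G x w j p \<le> 0) sequentially"
  proof
    fix j assume j: "j \<in> {1..n}"
    show "eventually (\<lambda>k. G (xk k) (wk k) j p \<le> 0 \<longleftrightarrow> G x w j p \<le> 0) sequentially"
    proof (cases "j = i")
      case True
      then show ?thesis by (simp add: G_def)
    next
      case False
      then have ne: "G x w j p \<noteq> 0" using pN j unfolding N_def by auto
      have l: "(\<lambda>k. G (xk k) (wk k) j p) \<longlonglongrightarrow> G x w j p"
        unfolding G_def by (intro tendsto_intros lx lw j i)
      show ?thesis
      proof (cases "G x w j p > 0")
        case True
        from order_tendstoD(1)[OF l True] show ?thesis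
          by eventually_elim (use True in auto)
      next
        case False
        then have "G x w j p < 0" using ne by auto
        from order_tendstoD(2)[OF l this] show ?thesis
          by eventually_elim (use False in auto)
      qed
    qed
  qed
  then have "eventually (\<lambda>k. \<forall>j\<in>{1..n}. G (xk k) (wk k) j p \<le> 0 \<longleftrightarrow> G x w j p \<le> 0) sequentially"
    by (rule eventually_ball_finite[rotated]) simp
  then show "eventually (\<lambda>k. p \<in> power_cell n (xk k) (wk k) i \<longleftrightarrow> p \<in> power_cell n x w i) sequentially"
    by eventually_elim (simp add: mem)
qed

theorem lemma6p7:
  fixes K :: "'a::euclidean_space set"
  assumes K: "convex_body K"
  shows
   "(\<forall>(ak :: nat \<Rightarrow> 'a) (bk :: nat \<Rightarrow> real) (a :: 'a) (b :: real).
       ((\<lambda>k. (ak k, bk k)) \<longlonglongrightarrow> (a, b)) \<and> a \<noteq> 0 \<and> (\<forall>k. ak k \<noteq> 0) \<and>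
       convex_body (K \<inter> halfspace_plus a b) \<and>
       (\<forall>k. convex_body (K \<inter> halfspace_plus (ak k) (bk k)))
       \<longrightarrow> ((\<lambda>k. dS (K \<inter> halfspace_plus (ak k) (bk k)) (K \<inter> halfspace_plus a b)) \<longlonglongrightarrow> 0))
    \<and>
    (\<forall>(n :: nat) (xk :: nat \<Rightarrow> nat \<Rightarrow> 'a) (wk :: nat \<Rightarrow> nat \<Rightarrow> real)
        (x :: nat \<Rightarrow> 'a) (w :: nat \<Rightarrow> real) (i :: nat).
       distinct_config n x \<and> zero_sum_weights n w \<and>
       (\<forall>k. distinct_config n (xk k) \<and> zero_sum_weights n (wk k)) \<and>
       (\<forall>j\<in>{1..n}. ((\<lambda>k. xk k j) \<longlonglongrightarrow> x j) \<and> ((\<lambda>k. wk k j) \<longlonglongrightarrow> w j)) \<and>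
       1 \<le> i \<and> i \<le> n \<and>
       convex_body (K \<inter> power_cell n x w i) \<and>
       (\<forall>k. convex_body (K \<inter> power_cell n (xk k) (wk k) i))
       \<longrightarrow> ((\<lambda>k. dS (K \<inter> power_cell n (xk k) (wk k) i) (K \<inter> power_cell n x w i)) \<longlonglongrightarrow> 0))"
proof -
  have cK: "compact K" using K by (simp add: convex_body_def)
  show ?thesis
  proof (intro conjI allI impI)
    fix ak bk a b
    assume h: "((\<lambda>k. (ak k, bk k)) \<longlonglongrightarrow> (a, b)) \<and> a \<noteq> 0 \<and> (\<forall>k. ak k \<noteq> (0::'a)) \<and>
       convex_body (K \<inter> halfspace_plus a b) \<and>
       (\<forall>k. convex_body (K \<inter> halfspace_plus (ak k) (bk k)))"
    show "(\<lambda>k. dS (K \<inter> halfspace_plus (ak k) (bk k)) (K \<inter> halfspace_plus a (b::real))) \<longlonglongrightarrow> 0"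
      using part1[OF cK] h by blast
  next
    fix n xk wk x w i
    assume h: "distinct_config n x \<and> zero_sum_weights n w \<and>
       (\<forall>k. distinct_config n (xk k) \<and> zero_sum_weights n (wk k)) \<and>
       (\<forall>j\<in>{1..n}. ((\<lambda>k. xk k j) \<longlonglongrightarrow> x j) \<and> ((\<lambda>k. wk k j) \<longlonglongrightarrow> w j)) \<and>
       1 \<le> i \<and> i \<le> n \<and>
       convex_body (K \<inter> power_cell n x w i) \<and>
       (\<forall>k. convex_body (K \<inter> power_cell n (xk k) (wk k) i))"
    show "(\<lambda>k. dS (K \<inter> power_cell n (xk k) (wk k) i) (K \<inter> power_cell n x w i)) \<longlonglongrightarrow> 0"
      using h by (intro part2[OF cK]) auto
  qed
qed

end
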